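(* For any subsets $I,J\subseteq\{1,\dots,n\}$, there are signs $\epsilon(I,J,R)\in\{\pm1\}$ such that \[ \beta(e_I,e_J)=2^{|I\cap J|}\sum_{R\subseteq I\Delta J}\epsilon(I,J,R)\, e_{I\cap J}\wedge e_R\wedge f_{I^c\cap J^c}\wedge f_R , \] where $I\Delta J=(I\setminus J)\cup(J\setminus I)$ and $I^c$ denotes the complement of $I$ in $\{1,\dots,n\}$.
   Context: Let $V$ be a complex vector space of dimension $2n$ with a nondegenerate symmetric bilinear form $q$, and $V=E\oplus F$ with $E,F$ maximal isotropic, with bases $e_1,\dots,e_n$ of $E$ and $f_1,\dots,f_n$ of $F$ such that $q(e_i,f_j)=\delta_{ij}$. For $v\in V$ let $o(v)$ be exterior multiplication by $v$ on $\wedge V$ and $i(v)$ the contraction $i(v)(v_1\wedge\cdots\wedge v_k)=\sum_j(-1)^{j-1}q(v,v_j)v_1\wedge\cdots\widehat{v_j}\cdots\wedge v_k$; set $\psi(v)=o(v)+i(v)$. The Clifford algebra $Cl(V)$ is the tensor algebra of $V$ modulo $v\otimes w+w\otimes v=2q(v,w)1$; $\psi$ extends to an algebra map $Cl(V)\to\mathrm{End}(\wedge V)$ and $\theta:Cl(V)\to\wedge V$, $x\mapsto\psi(x)\cdot 1$, is a linear isomorphism; we identify $Cl(V)$ with $\wedge V$ through $\theta$. In particular $Cl(E)\subset Cl(V)$ is identified with $\wedge E$ (a product $e_{i_1}\cdots e_{i_k}$ of distinct basis vectors of $E$ corresponds to $e_{i_1}\wedge\cdots\wedge e_{i_k}$).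 For $I=\{i_1<\dots<i_k\}$ write $e_I=e_{i_1}\wedge\cdots\wedge e_{i_k}$, $f_I=f_{i_1}\wedge\cdots\wedge f_{i_k}$ (equal to the corresponding Clifford products). Let $f=f_1f_2\cdots f_n\in Cl(V)$, and let $\alpha$ be the main anti-automorphism of $Cl(V)$, the unique algebra anti-automorphism restricting to the identity on $V$ (so $\alpha(v_1\cdots v_r)=v_r\cdots v_1$). For $u,v\in\wedge E\subset Cl(V)$ define $\beta(u,v)=\theta(u\,f\,\alpha(v))\in\wedge V$. *)

theory Defs
  imports Complex_Main
begin

text \<open>The exterior algebra \<wedge>V is modelled by coefficient functions on the standard
  monomial basis: the pair (A,B) of index sets stands for e_A \<wedge> f_B
  (e's in increasing order, followed by f's in increasing order).\<close>

datatype gen = E nat | F nat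

fun gless :: "gen \<Rightarrow> gen \<Rightarrow> bool" where
  "gless (E a) (E b) = (a < b)"
| "gless (E a) (F b) = True"
| "gless (F a) (E b) = False"
| "gless (F a) (F b) = (a < b)"

type_synonym mv = "nat set \<times> nat set \<Rightarrow> complex"

definition mono :: "nat set \<Rightarrow> nat set \<Rightarrow> mv" where
  "mono A B = (\<lambda>S. if S = (A, B) then 1 else 0)"

fun q :: "gen \<Rightarrow> gen \<Rightarrow> complex" where
  "q (E i) (F j) = (if i = j then 1 else 0)"
| "q (F i) (E j) = (if i = j then 1 else 0)"
| "q _ _ = 0"

definition inversions :: "gen list \<Rightarrow> nat" where
  "inversions ws = card {(i, j). i < j \<and> j < length ws \<and> gless (ws ! j) (ws ! i)}"

definition wedge_list :: "gen list \<Rightarrow> mv" where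
  "wedge_list ws = (if distinct ws
     then (\<lambda>S. (-1) ^ inversions ws * mono {a. E a \<in> set ws} {b. F b \<in> set ws} S)
     else (\<lambda>S. 0))"

definition gens :: "nat set \<Rightarrow> nat set \<Rightarrow> gen list" where
  "gens A B = map E (sorted_list_of_set A) @ map F (sorted_list_of_set B)"

definition idx :: "nat \<Rightarrow> (nat set \<times> nat set) set" where
  "idx n = Pow {1..n} \<times> Pow {1..n}"

definition ext_op :: "nat \<Rightarrow> gen \<Rightarrow> mv \<Rightarrow> mv" where
  "ext_op n g x = (\<lambda>S. \<Sum>T\<in>idx n. x T * wedge_list (g # gens (fst T) (snd T)) S)"

text \<open>Contraction i(g):
  i(v)(v_1\<wedge>...\<wedge>v_k) = \<Sum>_j (-1)^(j-1) q(v,v_j) v_1\<wedge>..(omit v_j)..\<wedge>v_k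
  (indices below are 0-based), extended linearly.\<close>
definition contr_word :: "gen \<Rightarrow> gen list \<Rightarrow> mv" where
  "contr_word g ws = (\<lambda>S. \<Sum>j<length ws.
      (-1) ^ j * q g (ws ! j) * wedge_list (take j ws @ drop (Suc j) ws) S)"

definition contr_op :: "nat \<Rightarrow> gen \<Rightarrow> mv \<Rightarrow> mv" where
  "contr_op n g x = (\<lambda>S. \<Sum>T\<in>idx n. x T * contr_word g (gens (fst T) (snd T)) S)"

definition psi :: "nat \<Rightarrow> gen \<Rightarrow> mv \<Rightarrow> mv" where
  "psi n g x = (\<lambda>S. ext_op n g x S + contr_op n g x S)"

definition theta_word :: "nat \<Rightarrow> gen list \<Rightarrow> mv" where
  "theta_word n ws = foldr (psi n) ws (mono {} {})"

definition eword :: "nat set \<Rightarrow> gen list" where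
  "eword I = map E (sorted_list_of_set I)"

definition fword :: "nat \<Rightarrow> gen list" where
  "fword n = map F [1..<Suc n]"

definition alpha_word :: "gen list \<Rightarrow> gen list" where
  "alpha_word ws = rev ws"

definition beta :: "nat \<Rightarrow> nat set \<Rightarrow> nat set \<Rightarrow> mv" where
  "beta n I J = theta_word n (eword I @ fword n @ alpha_word (eword J))"

end

theory Submission
  imports Defs
begin


fun gind :: "gen \<Rightarrow> nat" where "gind (E a) = a" | "gind (F a) = a"

definition cnt :: "gen \<Rightarrow> gen list \<Rightarrow> nat" where
  "cnt g xs = length (filter (\<lambda>y. gless y g) xs)"

lemma gless_irrefl[simp]: "\<not> gless g g" by (cases g) auto
lemma gless_asym: "gless a b \<Longrightarrow> \<not> gless b a" by (cases a; cases b) auto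
lemma gless_trans: "gless a b \<Longrightarrow> gless b c \<Longrightarrow> gless a c" by (cases a; cases b; cases c) auto
lemma gless_total: "a \<noteq> b \<Longrightarrow> gless a b \<or> gless b a" by (cases a; cases b) auto
lemma q_nz: "q g x \<noteq> 0 \<Longrightarrow> gind x = gind g" by (cases g; cases x) (auto split: if_splits)
lemma q_diff: "gind x \<noteq> gind g \<Longrightarrow> q g x = 0" using q_nz by blast

lemma inv_Nil[simp]: "inversions [] = 0" by (simp add: inversions_def)

lemma inv_Cons: "inversions (x # xs) = cnt x xs + inversions xs"
proof -
  let ?P = "{(i, j). i < j \<and> j < length (x#xs) \<and> gless ((x#xs) ! j) ((x#xs) ! i)}"
  let ?Q = "{(i, j). i < j \<and> j < length xs \<and> gless (xs ! j) (xs ! i)}"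
  let ?A = "{j. j < length xs \<and> gless (xs ! j) x}"
  have eq: "?P = (\<lambda>j. (0, Suc j)) ` ?A \<union> (\<lambda>(i,j). (Suc i, Suc j)) ` ?Q"
  proof (rule set_eqI, rule iffI)
    fix p assume "p \<in> ?P"
    then obtain i j where p: "p = (i,j)" "i < j" "j < length (x#xs)" "gless ((x#xs) ! j) ((x#xs) ! i)" by auto
    then obtain j' where j': "j = Suc j'" by (cases j) auto
    show "p \<in> (\<lambda>j. (0, Suc j)) ` ?A \<union> (\<lambda>(i,j). (Suc i, Suc j)) ` ?Q"
    proof (cases i)
      case 0 then show ?thesis using p j' by auto
    next
      case (Suc i') then have "(i', j') \<in> ?Q" using p j' by auto
      then show ?thesis using p j' Suc by (auto simp: image_iff)
    qed
  qed auto
  have fin1: "finite ?A" by auto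
  have fin2: "finite ?Q" by (rule finite_subset[of _ "{..<length xs} \<times> {..<length xs}"]) auto
  have "card ?P = card ((\<lambda>j. (0::nat, Suc j)) ` ?A) + card ((\<lambda>(i,j). (Suc i, Suc j)) ` ?Q)"
    unfolding eq by (rule card_Un_disjoint) (use fin1 fin2 in auto)
  also have "\<dots> = card ?A + card ?Q"
    by (subst card_image, simp add: inj_on_def, subst card_image) (auto simp: inj_on_def)
  finally show ?thesis unfolding inversions_def cnt_def length_filter_conv_card by simp
qed

lemma cnt_perm: "cnt x (u @ b # a # v) = cnt x (u @ a # b # v)"
  by (simp add: cnt_def)

lemma inv_swap: "gless a b \<Longrightarrow> inversions (u @ b # a # v) = Suc (inversions (u @ a # b # v))"
proof (induction u)
  case Nil then show ?case by (simp add: inv_Cons cnt_def gless_asym)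
next
  case (Cons x u) then show ?case by (simp add: inv_Cons cnt_perm)
qed

lemma inv_sorted: "sorted_wrt gless xs \<Longrightarrow> inversions xs = 0"
proof (induction xs)
  case (Cons x xs)
  then have "cnt x xs = 0" by (auto simp: cnt_def filter_empty_conv dest: gless_asym)
  with Cons show ?case by (simp add: inv_Cons)
qed simp

lemma cnt_set: "distinct xs \<Longrightarrow> distinct ys \<Longrightarrow> set xs = set ys \<Longrightarrow> cnt g xs = cnt g ys"
  by (simp add: cnt_def distinct_length_filter)

lemma cnt_pos: assumes "sorted_wrt gless xs" "p < length xs" shows "cnt (xs ! p) xs = p"
proof -
  have xs: "xs = take p xs @ xs ! p # drop (Suc p) xs" using assms(2) by (simp add: id_take_nth_drop)
  have s: "sorted_wrt gless (take p xs @ xs ! p # drop (Suc p) xs)" using assms(1) xs by simp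
  have "filter (\<lambda>y. gless y (xs ! p)) (take p xs) = take p xs"
    using s by (auto simp: sorted_wrt_append)
  moreover have "filter (\<lambda>y. gless y (xs ! p)) (drop (Suc p) xs) = []"
    using s by (auto simp: sorted_wrt_append filter_empty_conv dest: gless_asym)
  ultimately have "filter (\<lambda>y. gless y (xs ! p)) xs = take p xs"
    by (subst xs) simp
  then show ?thesis using assms(2) by (simp add: cnt_def)
qed


definition eset :: "gen list \<Rightarrow> nat set" where "eset ws = {a. E a \<in> set ws}"
definition fset :: "gen list \<Rightarrow> nat set" where "fset ws = {b. F b \<in> set ws}"
definition valid :: "nat \<Rightarrow> gen list \<Rightarrow> bool" where "valid N ws = (\<forall>x\<in>set ws. gind x \<in> {1..N})"

lemma set_EF: "set ws = E ` eset ws \<union> F ` fset ws"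
proof (rule set_eqI)
  fix x show "x \<in> set ws \<longleftrightarrow> x \<in> E ` eset ws \<union> F ` fset ws"
    by (cases x) (auto simp: eset_def fset_def)
qed

lemma valid_idx: "valid N ws \<Longrightarrow> (eset ws, fset ws) \<in> idx N"
  by (force simp: valid_def idx_def eset_def fset_def)

lemma wedge_distinct: "distinct ws \<Longrightarrow> wedge_list ws S = (-1) ^ inversions ws * Defs.mono (eset ws) (fset ws) S"
  by (simp add: wedge_list_def eset_def fset_def)

lemma wedge_nd: "\<not> distinct ws \<Longrightarrow> wedge_list ws S = 0"
  by (simp add: wedge_list_def)

lemma gens_set: "finite A \<Longrightarrow> finite B \<Longrightarrow> set (gens A B) = E ` A \<union> F ` B"
  by (simp add: gens_def)
lemma gens_distinct: "finite A \<Longrightarrow> finite B \<Longrightarrow> distinct (gens A B)"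
  by (auto simp: gens_def distinct_map inj_on_def)
lemma gens_sorted: "sorted_wrt gless (gens A B)"
proof -
  have a: "sorted_wrt (<) (sorted_list_of_set A)" "sorted_wrt (<) (sorted_list_of_set B)"
    by (simp_all add: strict_sorted_list_of_set)
  show ?thesis unfolding gens_def using a
    by (auto simp: sorted_wrt_append sorted_wrt_map elim!: sorted_wrt_mono_rel[rotated])
qed
lemma gens_eset: "finite A \<Longrightarrow> finite B \<Longrightarrow> eset (gens A B) = A"
  by (auto simp: eset_def gens_def)
lemma gens_fset: "finite A \<Longrightarrow> finite B \<Longrightarrow> fset (gens A B) = B"
  by (auto simp: fset_def gens_def)

lemma wedge_gens: "finite A \<Longrightarrow> finite B \<Longrightarrow> wedge_list (gens A B) S = Defs.mono A B S"
  by (simp add: wedge_distinct gens_distinct inv_sorted gens_sorted gens_eset gens_fset)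

lemma wedge_swap: "wedge_list (u @ a # b # v) S = - wedge_list (u @ b # a # v) S"
proof (cases "distinct (u @ a # b # v)")
  case True
  then have ab: "a \<noteq> b" by auto
  have d2: "distinct (u @ b # a # v)" using True by auto
  have es: "eset (u @ b # a # v) = eset (u @ a # b # v)" "fset (u @ b # a # v) = fset (u @ a # b # v)"
    by (auto simp: eset_def fset_def)
  from gless_total[OF ab] show ?thesis
  proof
    assume "gless a b" then show ?thesis
      using True d2 by (simp add: wedge_distinct inv_swap es)
  next
    assume "gless b a" then show ?thesis
      using True d2 inv_swap[of b a u v] by (simp add: wedge_distinct es)
  qed
next
  case False
  then have "\<not> distinct (u @ b # a # v)" by auto
  with False show ?thesis by (simp add: wedge_nd)
qed

lemma wedge_move: "wedge_list (pre @ g # u @ v) S = (-1) ^ length u * wedge_list (pre @ u @ g # v) S"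
proof (induction u arbitrary: pre)
  case Nil then show ?case by simp
next
  case (Cons x u)
  have "wedge_list (pre @ g # (x # u) @ v) S = - wedge_list ((pre @ [x]) @ g # u @ v) S"
    using wedge_swap[of pre g x "u @ v" S] by simp
  also have "\<dots> = - ((-1) ^ length u * wedge_list ((pre @ [x]) @ u @ g # v) S)"
    using Cons.IH[of "pre @ [x]"] by simp
  finally show ?case by simp
qed

lemma wedge_sameset:
  assumes "distinct ws" "distinct ws'" "set ws = set ws'"
  shows "\<exists>s::int. s \<in> {1, -1} \<and> wedge_list ws = (\<lambda>S. of_int s * wedge_list ws' S)"
proof -
  have es: "eset ws = eset ws'" "fset ws = fset ws'" using assms(3) by (auto simp: eset_def fset_def)
  let ?s = "(-1::int) ^ (inversions ws + inversions ws')"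
  have "?s \<in> {1, -1}" by (cases "even (inversions ws + inversions ws')") auto
  moreover have "wedge_list ws = (\<lambda>S. of_int ?s * wedge_list ws' S)"
  proof
    fix S
    have "(-1::complex) ^ inversions ws = (-1) ^ (inversions ws + inversions ws') * (-1) ^ inversions ws'"
    proof -
      have "(-1::complex) ^ (inversions ws + inversions ws') * (-1) ^ inversions ws'
          = (-1) ^ inversions ws * ((-1) ^ inversions ws' * (-1) ^ inversions ws')"
        by (simp add: power_add)
      also have "(-1::complex) ^ inversions ws' * (-1) ^ inversions ws' = 1"
        by (simp flip: power_add add: mult_2[symmetric])
      finally show ?thesis by simp
    qed
    then show "wedge_list ws S = of_int ?s * wedge_list ws' S"
      using assms by (simp add: wedge_distinct es)
  qed
  ultimately show ?thesis by blast
qed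


lemma finite_idx[simp]: "finite (idx N)" by (simp add: idx_def)

lemma idx_fin: "(A, B) \<in> idx N \<Longrightarrow> finite A \<and> finite B"
  by (auto simp: idx_def intro: finite_subset)

lemma ext_scaled_mono: "(A, B) \<in> idx N \<Longrightarrow>
   ext_op N g (\<lambda>S. c * Defs.mono A B S) = (\<lambda>S. c * wedge_list (g # gens A B) S)"
proof
  fix S assume AB: "(A, B) \<in> idx N"
  have "(\<Sum>T\<in>idx N. c * Defs.mono A B T * wedge_list (g # gens (fst T) (snd T)) S)
      = (\<Sum>T\<in>idx N. if T = (A, B) then c * wedge_list (g # gens (fst T) (snd T)) S else 0)"
    by (rule sum.cong) (auto simp: Defs.mono_def)
  also have "\<dots> = c * wedge_list (g # gens A B) S" using AB by (simp add: sum.delta')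
  finally show "ext_op N g (\<lambda>S. c * Defs.mono A B S) S = c * wedge_list (g # gens A B) S"
    by (simp add: ext_op_def)
qed

lemma contr_scaled_mono: "(A, B) \<in> idx N \<Longrightarrow>
   contr_op N g (\<lambda>S. c * Defs.mono A B S) = (\<lambda>S. c * contr_word g (gens A B) S)"
proof
  fix S assume AB: "(A, B) \<in> idx N"
  have "(\<Sum>T\<in>idx N. c * Defs.mono A B T * contr_word g (gens (fst T) (snd T)) S)
      = (\<Sum>T\<in>idx N. if T = (A, B) then c * contr_word g (gens (fst T) (snd T)) S else 0)"
    by (rule sum.cong) (auto simp: Defs.mono_def)
  also have "\<dots> = c * contr_word g (gens A B) S" using AB by (simp add: sum.delta')
  finally show "contr_op N g (\<lambda>S. c * Defs.mono A B S) S = c * contr_word g (gens A B) S"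
    by (simp add: contr_op_def)
qed

lemma ext_zero: "ext_op N g (\<lambda>S. 0) = (\<lambda>S. 0)" by (simp add: ext_op_def)
lemma contr_zero: "contr_op N g (\<lambda>S. 0) = (\<lambda>S. 0)" by (simp add: contr_op_def)

lemma wedge_fun_distinct: "distinct ws \<Longrightarrow> wedge_list ws = (\<lambda>S. (-1) ^ inversions ws * Defs.mono (eset ws) (fset ws) S)"
  by (rule ext) (simp add: wedge_distinct)
lemma wedge_fun_nd: "\<not> distinct ws \<Longrightarrow> wedge_list ws = (\<lambda>S. 0)"
  by (rule ext) (simp add: wedge_nd)

lemma set_gens_ws: "valid N ws \<Longrightarrow> set (gens (eset ws) (fset ws)) = set ws"
  using idx_fin[OF valid_idx] set_EF[of ws] gens_set by metis

lemma ext_wedge: assumes "valid N ws" shows "ext_op N g (wedge_list ws) = wedge_list (g # ws)"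
proof (cases "distinct ws")
  case True
  let ?A = "eset ws" and ?B = "fset ws"
  have fin: "finite ?A" "finite ?B" using idx_fin[OF valid_idx[OF assms]] by auto
  have sg: "set (gens ?A ?B) = set ws" using set_gens_ws[OF assms] .
  have "ext_op N g (wedge_list ws) = (\<lambda>S. (-1) ^ inversions ws * wedge_list (g # gens ?A ?B) S)"
    using True by (simp add: wedge_fun_distinct ext_scaled_mono valid_idx[OF assms])
  also have "\<dots> = wedge_list (g # ws)"
  proof
    fix S
    show "(-1) ^ inversions ws * wedge_list (g # gens ?A ?B) S = wedge_list (g # ws) S"
    proof (cases "g \<in> set ws")
      case True
      then show ?thesis using sg by (simp add: wedge_nd)
    next
      case False
      have d1: "distinct (g # gens ?A ?B)" using False sg gens_distinct[OF fin] by simp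
      have d2: "distinct (g # ws)" using False \<open>distinct ws\<close> by simp
      have es: "eset (g # gens ?A ?B) = eset (g # ws)" "fset (g # gens ?A ?B) = fset (g # ws)"
        using sg by (auto simp: eset_def fset_def)
      have c: "cnt g (gens ?A ?B) = cnt g ws" using cnt_set[OF gens_distinct[OF fin] \<open>distinct ws\<close> sg] .
      show ?thesis using d1 d2
        by (simp add: wedge_distinct es inv_Cons c inv_sorted[OF gens_sorted] power_add)
    qed
  qed
  finally show ?thesis .
next
  case False
  then show ?thesis by (simp add: wedge_fun_nd ext_zero)
qed

lemma C0: assumes "valid N ws" "\<forall>x\<in>set ws. q g x = 0"
  shows "contr_op N g (wedge_list ws) = (\<lambda>S. 0)"
proof (cases "distinct ws")
  case True
  let ?A = "eset ws" and ?B = "fset ws"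
  have sg: "set (gens ?A ?B) = set ws" using set_gens_ws[OF assms(1)] .
  have "contr_op N g (wedge_list ws) = (\<lambda>S. (-1) ^ inversions ws * contr_word g (gens ?A ?B) S)"
    using True by (simp add: wedge_fun_distinct contr_scaled_mono valid_idx[OF assms(1)])
  also have "\<dots> = (\<lambda>S. 0)"
  proof
    fix S
    have "\<forall>j<length (gens ?A ?B). q g (gens ?A ?B ! j) = 0"
      using assms(2) sg nth_mem by metis
    then show "(-1) ^ inversions ws * contr_word g (gens ?A ?B) S = 0"
      by (simp add: contr_word_def)
  qed
  finally show ?thesis .
next
  case False
  then show ?thesis by (simp add: wedge_fun_nd contr_zero)
qed


lemma del_props:
  assumes "distinct xs" "sorted_wrt gless xs" "p < length xs"
  shows "distinct (take p xs @ drop (Suc p) xs)" "sorted_wrt gless (take p xs @ drop (Suc p) xs)"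
        "set (take p xs @ drop (Suc p) xs) = set xs - {xs ! p}"
proof -
  have xs: "xs = take p xs @ xs ! p # drop (Suc p) xs" using assms(3) by (simp add: id_take_nth_drop)
  have d: "distinct (take p xs @ xs ! p # drop (Suc p) xs)" using assms(1) xs by simp
  have s: "sorted_wrt gless (take p xs @ xs ! p # drop (Suc p) xs)" using assms(2) xs by simp
  show "distinct (take p xs @ drop (Suc p) xs)" using d by auto
  show "sorted_wrt gless (take p xs @ drop (Suc p) xs)" using s by (auto simp: sorted_wrt_append)
  have "set xs = set (take p xs) \<union> {xs ! p} \<union> set (drop (Suc p) xs)"
    by (subst xs) auto
  then show "set (take p xs @ drop (Suc p) xs) = set xs - {xs ! p}" using d by auto
qed

lemma C1: assumes "valid N (h # v)" "\<forall>x\<in>set v. q g x = 0"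
  shows "contr_op N g (wedge_list (h # v)) = (\<lambda>S. q g h * wedge_list v S)"
proof (cases "distinct (h # v)")
  case False
  have "q g h * wedge_list v S = 0" for S
  proof (cases "distinct v")
    case True with False have "h \<in> set v" by simp
    with assms(2) show ?thesis by simp
  qed (simp add: wedge_nd)
  with False show ?thesis by (simp add: wedge_fun_nd contr_zero fun_eq_iff)
next
  case True
  let ?A = "eset (h # v)" and ?B = "fset (h # v)"
  let ?xs = "gens ?A ?B"
  have fin: "finite ?A" "finite ?B" using idx_fin[OF valid_idx[OF assms(1)]] by auto
  have sg: "set ?xs = set (h # v)" using set_gens_ws[OF assms(1)] .
  have dxs: "distinct ?xs" using gens_distinct[OF fin] .
  have sxs: "sorted_wrt gless ?xs" by (rule gens_sorted)
  obtain p where p: "p < length ?xs" "?xs ! p = h" using sg by (metis in_set_conv_nth list.set_intros(1))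
  have hv: "h \<notin> set v" using True by simp
  have pc: "p = cnt h v"
  proof -
    have "p = cnt (?xs ! p) ?xs" using cnt_pos[OF sxs p(1)] by simp
    also have "\<dots> = cnt h (h # v)" using p(2) cnt_set[OF dxs True sg] by simp
    also have "\<dots> = cnt h v" by (simp add: cnt_def)
    finally show ?thesis .
  qed
  note dp = del_props[OF dxs sxs p(1)]
  have sdel: "set (take p ?xs @ drop (Suc p) ?xs) = set v" using dp(3) sg p(2) hv by auto
  have wdel: "wedge_list (take p ?xs @ drop (Suc p) ?xs) S = Defs.mono (eset v) (fset v) S" for S
  proof -
    have "eset (take p ?xs @ drop (Suc p) ?xs) = eset v" "fset (take p ?xs @ drop (Suc p) ?xs) = fset v"
      using sdel by (auto simp: eset_def fset_def)
    then show ?thesis using dp(1) inv_sorted[OF dp(2)] by (simp add: wedge_distinct)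
  qed
  have cw: "contr_word g ?xs S = (-1) ^ p * q g h * Defs.mono (eset v) (fset v) S" for S
  proof -
    have "contr_word g ?xs S = (\<Sum>j<length ?xs. (-1) ^ j * q g (?xs ! j) * wedge_list (take j ?xs @ drop (Suc j) ?xs) S)"
      by (simp add: contr_word_def)
    also have "\<dots> = (\<Sum>j<length ?xs. if j = p then (-1) ^ j * q g (?xs ! j) * wedge_list (take j ?xs @ drop (Suc j) ?xs) S else 0)"
    proof (rule sum.cong[OF refl])
      fix j assume j: "j \<in> {..<length ?xs}"
      show "(-1) ^ j * q g (?xs ! j) * wedge_list (take j ?xs @ drop (Suc j) ?xs) S = (if j = p then (-1) ^ j * q g (?xs ! j) * wedge_list (take j ?xs @ drop (Suc j) ?xs) S else 0)"
      proof (cases "j = p")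
        case False
        then have "?xs ! j \<noteq> h" using p dxs j nth_eq_iff_index_eq by fastforce
        moreover have "?xs ! j \<in> set (h # v)" using j sg nth_mem by fastforce
        ultimately have "q g (?xs ! j) = 0" using assms(2) by auto
        then show ?thesis using False by simp
      qed simp
    qed
    also have "\<dots> = (-1) ^ p * q g h * Defs.mono (eset v) (fset v) S" using p by (simp add: wdel)
    finally show ?thesis .
  qed
  show ?thesis
  proof
    fix S
    have "contr_op N g (wedge_list (h # v)) S = (-1) ^ inversions (h # v) * contr_word g ?xs S"
      using True by (simp add: wedge_fun_distinct contr_scaled_mono valid_idx[OF assms(1)])
    also have "\<dots> = ((-1) ^ cnt h v * (-1) ^ cnt h v) * (-1) ^ inversions v * q g h * Defs.mono (eset v) (fset v) S"
      by (simp add: cw inv_Cons pc power_add)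
    also have "(-1::complex) ^ cnt h v * (-1) ^ cnt h v = 1" by (simp flip: power_add add: mult_2[symmetric])
    finally have X: "contr_op N g (wedge_list (h # v)) S = (-1) ^ inversions v * q g h * Defs.mono (eset v) (fset v) S" by simp
    have wv: "wedge_list v S = (-1) ^ inversions v * Defs.mono (eset v) (fset v) S"
      using True by (simp add: wedge_distinct)
    from X show "contr_op N g (wedge_list (h # v)) S = q g h * wedge_list v S"
      by (simp add: wv)
  qed
qed


lemma ext_scale: "ext_op N g (\<lambda>S. c * x S) = (\<lambda>S. c * ext_op N g x S)"
  by (simp add: ext_op_def sum_distrib_left mult.assoc)
lemma contr_scale: "contr_op N g (\<lambda>S. c * x S) = (\<lambda>S. c * contr_op N g x S)"
  by (simp add: contr_op_def sum_distrib_left mult.assoc)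
lemma psi_scale: "psi N g (\<lambda>S. c * x S) = (\<lambda>S. c * psi N g x S)"
  by (simp add: psi_def ext_scale contr_scale distrib_left)

lemma psi_sum: "psi N g (\<lambda>S. \<Sum>i\<in>K. f i S) = (\<lambda>S. \<Sum>i\<in>K. psi N g (f i) S)"
  by (simp add: psi_def ext_op_def contr_op_def sum_distrib_right sum.distrib sum.swap[of _ K])

lemma neg1_sq: "(-1::complex) ^ n * (-1) ^ n = 1"
  by (simp flip: power_add add: mult_2[symmetric])

lemma valid_set: "valid N ws \<Longrightarrow> set ws' = set ws \<Longrightarrow> valid N ws'"
  by (simp add: valid_def)

lemma LS0: assumes "valid N (U @ b @ V)" "\<forall>x\<in>set (U @ b @ V). q g x = 0"
  shows "psi N g (wedge_list (U @ b @ V)) = (\<lambda>S. (-1) ^ length U * wedge_list (U @ (g # b) @ V) S)"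
proof
  fix S
  have "ext_op N g (wedge_list (U @ b @ V)) S = wedge_list ([] @ g # U @ (b @ V)) S"
    using ext_wedge[OF assms(1)] by simp
  also have "\<dots> = (-1) ^ length U * wedge_list (U @ (g # b) @ V) S"
    by (subst wedge_move) simp
  finally show "psi N g (wedge_list (U @ b @ V)) S = (-1) ^ length U * wedge_list (U @ (g # b) @ V) S"
    by (simp add: psi_def C0[OF assms])
qed

lemma LS1: assumes "valid N (U @ h # b' @ V)" "\<forall>x\<in>set U \<union> set b' \<union> set V. q g x = 0"
  shows "psi N g (wedge_list (U @ h # b' @ V)) =
    (\<lambda>S. (-1) ^ length U * (wedge_list (U @ g # h # b' @ V) S + q g h * wedge_list (U @ b' @ V) S))"
proof
  fix S
  have e: "ext_op N g (wedge_list (U @ h # b' @ V)) S = (-1) ^ length U * wedge_list (U @ g # h # b' @ V) S"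
  proof -
    have "ext_op N g (wedge_list (U @ h # b' @ V)) S = wedge_list ([] @ g # U @ (h # b' @ V)) S"
      using ext_wedge[OF assms(1)] by simp
    also have "\<dots> = (-1) ^ length U * wedge_list (U @ g # h # b' @ V) S"
      by (subst wedge_move) simp
    finally show ?thesis .
  qed
  have w: "wedge_list (U @ h # b' @ V) = (\<lambda>S. (-1) ^ length U * wedge_list (h # U @ b' @ V) S)"
  proof
    fix S
    have "wedge_list ([] @ h # U @ (b' @ V)) S = (-1) ^ length U * wedge_list ([] @ U @ h # (b' @ V)) S"
      by (rule wedge_move)
    then have "(-1) ^ length U * wedge_list (h # U @ b' @ V) S = ((-1) ^ length U * (-1) ^ length U) * wedge_list (U @ h # b' @ V) S"
      by simp
    then show "wedge_list (U @ h # b' @ V) S = (-1) ^ length U * wedge_list (h # U @ b' @ V) S"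
      by (simp add: neg1_sq)
  qed
  have v2: "valid N (h # U @ b' @ V)" using assms(1) by (rule valid_set) auto
  have c: "contr_op N g (wedge_list (U @ h # b' @ V)) S = (-1) ^ length U * (q g h * wedge_list (U @ b' @ V) S)"
    unfolding w contr_scale using C1[OF v2] assms(2) by simp
  show "psi N g (wedge_list (U @ h # b' @ V)) S = (-1) ^ length U * (wedge_list (U @ g # h # b' @ V) S + q g h * wedge_list (U @ b' @ V) S)"
    by (simp add: psi_def e c distrib_left)
qed

lemma phase1: "valid N ws \<Longrightarrow> (\<forall>x\<in>set ws. \<forall>y\<in>set ws. q x y = 0) \<Longrightarrow>
   foldr (psi N) ws (Defs.mono {} {}) = wedge_list ws"
proof (induction ws)
  case Nil
  show ?case by (rule ext) (simp add: wedge_distinct eset_def fset_def)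
next
  case (Cons g ws)
  have v: "valid N ws" using Cons.prems(1) by (simp add: valid_def)
  have "foldr (psi N) (g # ws) (Defs.mono {} {}) = psi N g (wedge_list ws)"
    using Cons v by simp
  also have "\<dots> = wedge_list (g # ws)"
    using LS0[of N "[]" ws "[]" g] v Cons.prems(2) by simp
  finally show ?case .
qed




definition cw :: "nat \<Rightarrow> (nat \<Rightarrow> gen list) \<Rightarrow> gen list" where
  "cw N blk = concat (map blk [1..<Suc N])"

definition goodblk :: "(nat \<Rightarrow> gen list) \<Rightarrow> bool" where
  "goodblk blk = (\<forall>k. \<forall>x\<in>set (blk k). gind x = k)"

definition pre :: "(nat \<Rightarrow> gen list) \<Rightarrow> nat \<Rightarrow> gen list" where
  "pre blk k = concat (map blk [1..<k])"
definition suf :: "nat \<Rightarrow> (nat \<Rightarrow> gen list) \<Rightarrow> nat \<Rightarrow> gen list" where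
  "suf N blk k = concat (map blk [Suc k..<Suc N])"

lemma upt_split3: "1 \<le> k \<Longrightarrow> k \<le> N \<Longrightarrow> [1..<Suc N] = [1..<k] @ k # [Suc k..<Suc N]"
proof -
  assume a: "1 \<le> k" "k \<le> N"
  have "[1..<k + (Suc N - k)] = [1..<k] @ [k..<k + (Suc N - k)]" using a by (intro upt_add_eq_append) simp
  moreover have "[k..<Suc N] = k # [Suc k..<Suc N]" using a by (simp add: upt_conv_Cons)
  ultimately show ?thesis using a by simp
qed

lemma cw_split: "1 \<le> k \<Longrightarrow> k \<le> N \<Longrightarrow> cw N blk = pre blk k @ blk k @ suf N blk k"
  using upt_split3[of k N] by (simp add: cw_def pre_def suf_def del: upt_Suc)

lemma cw_upd: "1 \<le> k \<Longrightarrow> k \<le> N \<Longrightarrow> cw N (blk(k := b)) = pre blk k @ b @ suf N blk k"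
proof -
  assume a: "1 \<le> k" "k \<le> N"
  have "pre (blk(k := b)) k = pre blk k" unfolding pre_def by (rule arg_cong[where f=concat]) auto
  moreover have "suf N (blk(k := b)) k = suf N blk k" unfolding suf_def by (rule arg_cong[where f=concat]) auto
  ultimately show ?thesis using cw_split[OF a, of "blk(k := b)"] by simp
qed

lemma cw_cong: "(\<And>k. k \<in> {1..N} \<Longrightarrow> b1 k = b2 k) \<Longrightarrow> cw N b1 = cw N b2"
  unfolding cw_def by (rule arg_cong[where f=concat]) auto

lemma set_cw: "set (cw N blk) = (\<Union>k\<in>{1..N}. set (blk k))"
proof -
  have "set [1..<Suc N] = {1..N}" by auto
  then show ?thesis by (simp add: cw_def del: upt_Suc)
qed

lemma set_cw_mem: "goodblk blk \<Longrightarrow> x \<in> set (cw N blk) \<longleftrightarrow> gind x \<in> {1..N} \<and> x \<in> set (blk (gind x))"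
proof
  assume g: "goodblk blk" and "x \<in> set (cw N blk)"
  then obtain k where k: "k \<in> {1..N}" "x \<in> set (blk k)" unfolding set_cw by blast
  with g have "gind x = k" unfolding goodblk_def by blast
  with k show "gind x \<in> {1..N} \<and> x \<in> set (blk (gind x))" by simp
next
  assume "gind x \<in> {1..N} \<and> x \<in> set (blk (gind x))"
  then show "x \<in> set (cw N blk)" unfolding set_cw by blast
qed

lemma valid_cw: "goodblk blk \<Longrightarrow> valid N (cw N blk)"
  by (auto simp: valid_def set_cw_mem)

lemma distinct_concat_blk: "goodblk blk \<Longrightarrow> (\<forall>k. distinct (blk k)) \<Longrightarrow> distinct xs \<Longrightarrow> distinct (concat (map blk xs))"
proof (induction xs)
  case (Cons a xs)
  have "set (blk a) \<inter> set (concat (map blk xs)) = {}"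
  proof (rule ccontr)
    assume "set (blk a) \<inter> set (concat (map blk xs)) \<noteq> {}"
    then obtain y b where y: "y \<in> set (blk a)" "b \<in> set xs" "y \<in> set (blk b)" by auto
    have "gind y = a" "gind y = b" using Cons.prems(1) y unfolding goodblk_def by blast+
    then show False using y(2) Cons.prems(3) by auto
  qed
  then show ?case using Cons by simp
qed simp

lemma distinct_cw: "goodblk blk \<Longrightarrow> (\<forall>k. distinct (blk k)) \<Longrightarrow> distinct (cw N blk)"
  unfolding cw_def by (rule distinct_concat_blk) auto

lemma parity_concat: "(\<forall>j\<in>set xs. even (length (b1 j)) = even (length (b2 j))) \<Longrightarrow>
  (-1::complex) ^ length (concat (map b1 xs)) = (-1) ^ length (concat (map b2 xs))"
proof (induction xs)
  case (Cons a xs)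
  then have "(-1::complex) ^ length (b1 a) = (-1) ^ length (b2 a)"
    by (cases "even (length (b1 a))") (auto simp: neg_one_even_power neg_one_odd_power)
  then show ?case using Cons by (simp add: power_add)
qed simp


lemma pre_ind: "goodblk blk \<Longrightarrow> x \<in> set (pre blk k) \<Longrightarrow> gind x < k"
  unfolding pre_def goodblk_def by auto
lemma suf_ind: "goodblk blk \<Longrightarrow> x \<in> set (suf N blk k) \<Longrightarrow> gind x > k"
  unfolding suf_def goodblk_def by auto

lemma step0:
  assumes "goodblk blk" "1 \<le> k" "k \<le> N" "gind g = k" "\<forall>x\<in>set (blk k). q g x = 0"
  shows "psi N g (wedge_list (cw N blk)) = (\<lambda>S. (-1) ^ length (pre blk k) * wedge_list (cw N (blk(k := g # blk k))) S)"
proof -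
  have v: "valid N (pre blk k @ blk k @ suf N blk k)" using valid_cw[OF assms(1), of N] cw_split[OF assms(2,3)] by simp
  have qq: "\<forall>x\<in>set (pre blk k @ blk k @ suf N blk k). q g x = 0"
    using assms(5) pre_ind[OF assms(1)] suf_ind[OF assms(1)] assms(4) q_diff by fastforce
  show ?thesis using LS0[OF v qq] cw_split[OF assms(2,3), of blk] cw_upd[OF assms(2,3), of blk "g # blk k"] by simp
qed

lemma step1:
  assumes "goodblk blk" "1 \<le> k" "k \<le> N" "gind g = k" "blk k = h # b'" "\<forall>x\<in>set b'. q g x = 0"
  shows "psi N g (wedge_list (cw N blk)) = (\<lambda>S. (-1) ^ length (pre blk k) *
     (wedge_list (cw N (blk(k := g # h # b'))) S + q g h * wedge_list (cw N (blk(k := b'))) S))"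
proof -
  have v: "valid N (pre blk k @ h # b' @ suf N blk k)" using valid_cw[OF assms(1), of N] cw_split[OF assms(2,3)] assms(5) by simp
  have qq: "\<forall>x\<in>set (pre blk k) \<union> set b' \<union> set (suf N blk k). q g x = 0"
    using assms(6) pre_ind[OF assms(1)] suf_ind[OF assms(1)] assms(4) q_diff by fastforce
  show ?thesis using LS1[OF v qq] cw_split[OF assms(2,3), of blk] cw_upd[OF assms(2,3), of blk "g # h # b'"]
     cw_upd[OF assms(2,3), of blk "b'"] assms(5) by simp
qed

lemma sum_split: assumes "finite A" "k \<notin> A"
  shows "(\<Sum>D\<in>Pow A. f D + f (insert k D)) = (\<Sum>D\<in>Pow (insert k A). (f D :: complex))"
proof -
  have inj: "inj_on (insert k) (Pow A)"
  proof (rule inj_onI)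
    fix x y assume "x \<in> Pow A" "y \<in> Pow A" "insert k x = insert k y"
    then have "insert k x - {k} = insert k y - {k}" "k \<notin> x" "k \<notin> y" using assms(2) by auto
    then show "x = y" by simp
  qed
  have disj: "Pow A \<inter> insert k ` Pow A = {}" using assms(2) by blast
  have "(\<Sum>D\<in>Pow (insert k A). f D) = (\<Sum>D\<in>Pow A. f D) + (\<Sum>D\<in>insert k ` Pow A. f D)"
    unfolding Pow_insert using assms(1) disj by (intro sum.union_disjoint) auto
  also have "(\<Sum>D\<in>insert k ` Pow A. f D) = (\<Sum>D\<in>Pow A. f (insert k D))"
    using sum.reindex[OF inj] by simp
  finally show ?thesis by (simp add: sum.distrib)
qed

lemma sum_merge: assumes "finite A" "k \<in> A"
  shows "(\<Sum>D\<in>Pow A. f (D - {k})) = 2 * (\<Sum>D\<in>Pow (A - {k}). (f D :: complex))"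
proof -
  let ?A = "A - {k}"
  have A: "A = insert k ?A" using assms(2) by blast
  have "(\<Sum>D\<in>Pow (insert k ?A). f (D - {k})) = (\<Sum>D\<in>Pow ?A. f (D - {k}) + f (insert k D - {k}))"
    using sum_split[of ?A k "\<lambda>D. f (D - {k})"] assms(1) by simp
  also have "\<dots> = (\<Sum>D\<in>Pow ?A. 2 * f D)"
  proof (rule sum.cong[OF refl])
    fix D assume "D \<in> Pow ?A"
    then have "D - {k} = D" "insert k D - {k} = D" by auto
    then show "f (D - {k}) + f (insert k D - {k}) = 2 * f D" by simp
  qed
  finally show ?thesis using A by (simp add: sum_distrib_left)
qed



definition blk2 :: "nat set \<Rightarrow> nat \<Rightarrow> nat set \<Rightarrow> nat \<Rightarrow> gen list" where
 "blk2 J m D k = (if k \<le> m then (if k \<in> J then [E k] else [])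
     else (if k \<in> J then (if k \<in> D then [] else [F k, E k]) else [F k]))"

lemma good2: "goodblk (blk2 J m D)" by (simp add: goodblk_def blk2_def)
lemma dist2: "\<forall>k. distinct (blk2 J m D k)" by (simp add: blk2_def)

lemma pm1: "(\<sigma>::int) \<in> {1, -1} \<Longrightarrow> \<sigma> * (-1) ^ n \<in> {1, -1}"
  by (cases "even n") auto

lemma neg1_int: "(-1::complex) ^ n = of_int ((-1::int) ^ n)" by simp

lemma phase2:
  assumes J: "J \<subseteq> {1..N}" and m: "m \<le> N"
  shows "\<exists>\<sigma>::int. \<sigma> \<in> {1, -1} \<and> foldr (psi N) (map F [Suc m..<Suc N]) (wedge_list (rev (map E (sorted_list_of_set J))))
     = (\<lambda>S. of_int \<sigma> * (\<Sum>D\<in>Pow (J \<inter> {Suc m..N}). wedge_list (cw N (blk2 J m D)) S))"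
  using m
proof (induction m rule: inc_induct)
  case base
  have finJ: "finite J" using J finite_subset by blast
  have "set (cw N (blk2 J N {})) = E ` J"
  proof -
    have "set (cw N (blk2 J N {})) = (\<Union>k\<in>{1..N}. set (blk2 J N {} k))" by (rule set_cw)
    also have "\<dots> = (\<Union>k\<in>{1..N}. if k \<in> J then {E k} else {})" by (rule SUP_cong[OF refl]) (simp add: blk2_def)
    also have "\<dots> = E ` J" using J by auto
    finally show ?thesis .
  qed
  then have "\<exists>s::int. s \<in> {1, -1} \<and> wedge_list (rev (map E (sorted_list_of_set J))) = (\<lambda>S. of_int s * wedge_list (cw N (blk2 J N {})) S)"
    using finJ by (intro wedge_sameset) (auto simp: distinct_map distinct_cw good2 dist2 inj_on_def)
  then show ?case by auto
next
  case (step n)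
  let ?k = "Suc n"
  obtain \<sigma> :: int where s: "\<sigma> \<in> {1, -1}" and IH: "foldr (psi N) (map F [Suc ?k..<Suc N]) (wedge_list (rev (map E (sorted_list_of_set J))))
     = (\<lambda>S. of_int \<sigma> * (\<Sum>D\<in>Pow (J \<inter> {Suc ?k..N}). wedge_list (cw N (blk2 J ?k D)) S))" using step.IH by blast
  let ?A = "J \<inter> {Suc ?k..N}"
  have k1: "1 \<le> ?k" and kN: "?k \<le> N" using step.hyps by auto
  have upt: "[Suc n..<Suc N] = ?k # [Suc ?k..<Suc N]" using step.hyps by (simp add: upt_conv_Cons)
  let ?len = "length (pre (blk2 J ?k {}) ?k)"
  have prek: "pre (blk2 J ?k D) ?k = pre (blk2 J ?k {}) ?k" for D
    unfolding pre_def by (rule arg_cong[where f=concat]) (auto simp: blk2_def)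
  have start: "foldr (psi N) (map F [Suc n..<Suc N]) (wedge_list (rev (map E (sorted_list_of_set J))))
     = (\<lambda>S. of_int \<sigma> * (\<Sum>D\<in>Pow ?A. psi N (F ?k) (wedge_list (cw N (blk2 J ?k D))) S))"
    by (simp only: upt list.map foldr_Cons o_apply IH psi_scale psi_sum)
  show ?case
  proof (cases "?k \<in> J")
    case False
    have t: "psi N (F ?k) (wedge_list (cw N (blk2 J ?k D))) = (\<lambda>S. (-1) ^ ?len * wedge_list (cw N (blk2 J n D)) S)" for D
    proof -
      have "(blk2 J ?k D)(?k := F ?k # blk2 J ?k D ?k) = blk2 J n D"
        using False by (auto simp: blk2_def fun_eq_iff)
      then show ?thesis using step0[OF good2 k1 kN, of "F ?k" J ?k D] False prek[of D] by (simp add: blk2_def)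
    qed
    have A: "J \<inter> {Suc n..N} = ?A" using False by (auto simp: Suc_le_eq le_less)
    have "foldr (psi N) (map F [Suc n..<Suc N]) (wedge_list (rev (map E (sorted_list_of_set J))))
       = (\<lambda>S. of_int \<sigma> * (\<Sum>D\<in>Pow ?A. (-1) ^ ?len * wedge_list (cw N (blk2 J n D)) S))"
      unfolding start by (rule ext, rule arg_cong[where f="\<lambda>x. _ * x"], rule sum.cong) (auto simp: t)
    also have "\<dots> = (\<lambda>S. of_int (\<sigma> * (-1) ^ ?len) * (\<Sum>D\<in>Pow (J \<inter> {Suc n..N}). wedge_list (cw N (blk2 J n D)) S))"
      by (simp add: A sum_distrib_left mult.assoc)
    finally show ?thesis using pm1[OF s] by blast
  next
    case True
    have t: "psi N (F ?k) (wedge_list (cw N (blk2 J ?k D))) = (\<lambda>S. (-1) ^ ?len * (wedge_list (cw N (blk2 J n D)) S + wedge_list (cw N (blk2 J n (insert ?k D))) S))"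
      if D: "D \<in> Pow ?A" for D
    proof -
      have kD: "?k \<notin> D" using D by auto
      have e1: "(blk2 J ?k D)(?k := [F ?k, E ?k]) = blk2 J n D"
        using True kD by (auto simp: blk2_def fun_eq_iff)
      have e2: "(blk2 J ?k D)(?k := []) = blk2 J n (insert ?k D)"
        using True kD by (auto simp: blk2_def fun_eq_iff)
      have bk: "blk2 J ?k D ?k = [E ?k]" using True by (simp add: blk2_def)
      show ?thesis using step1[OF good2 k1 kN _ bk, of "F ?k"] e1 e2 prek[of D] by simp
    qed
    have A: "J \<inter> {Suc n..N} = insert ?k ?A" using True kN by (auto simp: Suc_le_eq le_less)
    have sp: "(\<Sum>D\<in>Pow ?A. wedge_list (cw N (blk2 J n D)) S + wedge_list (cw N (blk2 J n (insert ?k D))) S)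
       = (\<Sum>D\<in>Pow (insert ?k ?A). wedge_list (cw N (blk2 J n D)) S)" for S
      by (rule sum_split) auto
    have "foldr (psi N) (map F [Suc n..<Suc N]) (wedge_list (rev (map E (sorted_list_of_set J))))
       = (\<lambda>S. of_int \<sigma> * (\<Sum>D\<in>Pow ?A. (-1) ^ ?len * (wedge_list (cw N (blk2 J n D)) S + wedge_list (cw N (blk2 J n (insert ?k D))) S)))"
      unfolding start by (rule ext, rule arg_cong[where f="\<lambda>x. _ * x"], rule sum.cong) (auto simp: t)
    also have "\<dots> = (\<lambda>S. of_int (\<sigma> * (-1) ^ ?len) * (\<Sum>D\<in>Pow (J \<inter> {Suc n..N}). wedge_list (cw N (blk2 J n D)) S))"
      by (simp add: A sp[symmetric] sum_distrib_left mult.assoc)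
    finally show ?thesis using pm1[OF s] by blast
  qed
qed



definition blk3 :: "nat set \<Rightarrow> nat set \<Rightarrow> nat \<Rightarrow> nat set \<Rightarrow> nat \<Rightarrow> gen list" where
 "blk3 I J p T k = (if k \<le> p then (if k \<in> J then (if k \<in> T then [] else [F k, E k]) else [F k])
    else if k \<in> I \<and> k \<in> J then [E k]
    else if k \<in> J then (if k \<in> T then [] else [F k, E k])
    else if k \<in> I then (if k \<in> T then [E k, F k] else [])
    else [F k])"

definition A3 :: "nat set \<Rightarrow> nat set \<Rightarrow> nat \<Rightarrow> nat \<Rightarrow> nat set" where
 "A3 I J N p = (J \<inter> {1..p}) \<union> (((J - I) \<union> (I - J)) \<inter> {Suc p..N})"

lemma good3: "goodblk (blk3 I J p T)" by (auto simp: goodblk_def blk3_def)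
lemma dist3: "\<forall>k. distinct (blk3 I J p T k)" by (simp add: blk3_def)
lemma finA3: "finite (A3 I J N p)" unfolding A3_def
  by (meson finite_Int finite_Un finite_atLeastAtMost)

lemma phase3:
  assumes I: "I \<subseteq> {1..N}" and J: "J \<subseteq> {1..N}" and p: "p \<le> N"
    and X2: "X2 = (\<lambda>S. of_int \<sigma>2 * (\<Sum>D\<in>Pow (J \<inter> {Suc 0..N}). wedge_list (cw N (blk2 J 0 D)) S))"
    and s2: "\<sigma>2 \<in> {1, -1}"
  shows "\<exists>\<sigma>::int. \<sigma> \<in> {1, -1} \<and> foldr (psi N) (map E (filter (\<lambda>i. i \<in> I) [Suc p..<Suc N])) X2
     = (\<lambda>S. of_int \<sigma> * (2 ^ card (I \<inter> J \<inter> {Suc p..N}) * (\<Sum>T\<in>Pow (A3 I J N p). wedge_list (cw N (blk3 I J p T)) S)))"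
  using p
proof (induction p rule: inc_induct)
  case base
  have A: "A3 I J N N = J \<inter> {Suc 0..N}" by (auto simp: A3_def)
  have c: "cw N (blk3 I J N T) = cw N (blk2 J 0 T)" for T
    by (rule cw_cong) (auto simp: blk3_def blk2_def)
  show ?case using s2 by (auto simp: X2 A c)
next
  case (step n)
  let ?k = "Suc n"
  obtain \<sigma> :: int where s: "\<sigma> \<in> {1, -1}" and IH: "foldr (psi N) (map E (filter (\<lambda>i. i \<in> I) [Suc ?k..<Suc N])) X2
     = (\<lambda>S. of_int \<sigma> * (2 ^ card (I \<inter> J \<inter> {Suc ?k..N}) * (\<Sum>T\<in>Pow (A3 I J N ?k). wedge_list (cw N (blk3 I J ?k T)) S)))"
    using step.IH by blast
  let ?A = "A3 I J N ?k"
  let ?c = "card (I \<inter> J \<inter> {Suc ?k..N})"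
  have k1: "1 \<le> ?k" and kN: "?k \<le> N" using step.hyps by auto
  have upt: "[Suc n..<Suc N] = ?k # [Suc ?k..<Suc N]" using step.hyps by (simp add: upt_conv_Cons)
  let ?len = "length (pre (blk3 I J ?k {}) ?k)"
  have prek: "(-1::complex) ^ length (pre (blk3 I J ?k T) ?k) = (-1) ^ ?len" for T
    unfolding pre_def by (rule parity_concat) (auto simp: blk3_def)
  show ?case
  proof (cases "?k \<in> I")
    case False
    have f: "filter (\<lambda>i. i \<in> I) [Suc n..<Suc N] = filter (\<lambda>i. i \<in> I) [Suc ?k..<Suc N]"
      using False by (simp add: upt del: upt_Suc)
    have b: "blk3 I J n T = blk3 I J ?k T" for T using False by (auto simp: blk3_def fun_eq_iff le_Suc_eq)
    have A: "A3 I J N n = ?A" using False kN by (auto simp: A3_def Suc_le_eq le_less)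
    have c: "I \<inter> J \<inter> {Suc n..N} = I \<inter> J \<inter> {Suc ?k..N}" using False by (auto simp: Suc_le_eq le_less)
    show ?thesis using s IH by (simp only: f b A c) blast
  next
    case True
    have f: "filter (\<lambda>i. i \<in> I) [Suc n..<Suc N] = ?k # filter (\<lambda>i. i \<in> I) [Suc ?k..<Suc N]"
      using True by (simp add: upt del: upt_Suc)
    have start: "foldr (psi N) (map E (filter (\<lambda>i. i \<in> I) [Suc n..<Suc N])) X2
      = (\<lambda>S. of_int \<sigma> * (2 ^ ?c * (\<Sum>T\<in>Pow ?A. psi N (E ?k) (wedge_list (cw N (blk3 I J ?k T))) S)))"
      by (simp only: f list.map foldr_Cons o_apply IH psi_scale psi_sum)
    show ?thesis
    proof (cases "?k \<in> J")
      case False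
      have t: "psi N (E ?k) (wedge_list (cw N (blk3 I J ?k T))) = (\<lambda>S. (-1) ^ ?len * (wedge_list (cw N (blk3 I J n T)) S + wedge_list (cw N (blk3 I J n (insert ?k T))) S))"
        if T: "T \<in> Pow ?A" for T
      proof -
        have kT: "?k \<notin> T" using T False by (auto simp: A3_def)
        have e1: "(blk3 I J ?k T)(?k := [E ?k, F ?k]) = blk3 I J n (insert ?k T)"
          using True False kT by (auto simp: blk3_def fun_eq_iff)
        have e2: "(blk3 I J ?k T)(?k := []) = blk3 I J n T"
          using True False kT by (auto simp: blk3_def fun_eq_iff)
        have bk: "blk3 I J ?k T ?k = [F ?k]" using False by (simp add: blk3_def)
        show ?thesis using step1[OF good3 k1 kN _ bk, of "E ?k"] e1 e2 prek[of T] by (simp add: add.commute)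
      qed
      have kA: "?k \<notin> ?A" using False by (auto simp: A3_def)
      have A: "A3 I J N n = insert ?k ?A" using True False kN by (auto simp: A3_def Suc_le_eq le_less)
      have c: "I \<inter> J \<inter> {Suc n..N} = I \<inter> J \<inter> {Suc ?k..N}" using False by (auto simp: Suc_le_eq le_less)
      have sp: "(\<Sum>T\<in>Pow ?A. wedge_list (cw N (blk3 I J n T)) S + wedge_list (cw N (blk3 I J n (insert ?k T))) S)
         = (\<Sum>T\<in>Pow (insert ?k ?A). wedge_list (cw N (blk3 I J n T)) S)" for S
        by (rule sum_split[OF finA3 kA])
      have "foldr (psi N) (map E (filter (\<lambda>i. i \<in> I) [Suc n..<Suc N])) X2
         = (\<lambda>S. of_int \<sigma> * (2 ^ ?c * (\<Sum>T\<in>Pow ?A. (-1) ^ ?len * (wedge_list (cw N (blk3 I J n T)) S + wedge_list (cw N (blk3 I J n (insert ?k T))) S))))"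
        unfolding start by (rule ext, rule arg_cong[where f="\<lambda>x. _ * (_ * x)"], rule sum.cong) (auto simp: t)
      also have "\<dots> = (\<lambda>S. of_int (\<sigma> * (-1) ^ ?len) * (2 ^ card (I \<inter> J \<inter> {Suc n..N}) * (\<Sum>T\<in>Pow (A3 I J N n). wedge_list (cw N (blk3 I J n T)) S)))"
        by (simp add: A c sp[symmetric] sum_distrib_left mult.assoc mult.left_commute)
      finally show ?thesis using pm1[OF s] by blast
    next
      case True2: True
      have t: "psi N (E ?k) (wedge_list (cw N (blk3 I J ?k T))) = (\<lambda>S. (-1) ^ ?len * wedge_list (cw N (blk3 I J n (T - {?k}))) S)"
        if T: "T \<in> Pow ?A" for T
      proof (cases "?k \<in> T")
        case True3: True
        have e: "(blk3 I J ?k T)(?k := [E ?k]) = blk3 I J n (T - {?k})"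
          using True True2 by (auto simp: blk3_def fun_eq_iff)
        have bk: "blk3 I J ?k T ?k = []" using True2 True3 by (simp add: blk3_def)
        show ?thesis using step0[OF good3 k1 kN, of "E ?k" I J ?k T] e bk prek[of T] by simp
      next
        case False
        have e: "(blk3 I J ?k T)(?k := [E ?k]) = blk3 I J n (T - {?k})"
          using True True2 False by (auto simp: blk3_def fun_eq_iff)
        have bk: "blk3 I J ?k T ?k = [F ?k, E ?k]" using True2 False by (simp add: blk3_def)
        have z: "wedge_list (cw N ((blk3 I J ?k T)(?k := [E ?k, F ?k, E ?k]))) S = 0" for S
          by (rule wedge_nd) (simp add: cw_upd[OF k1 kN])
        show ?thesis using step1[OF good3 k1 kN _ bk, of "E ?k"] e prek[of T] z by simp
      qed
      have kA: "?k \<in> ?A" using True2 kN by (auto simp: A3_def)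
      have A: "A3 I J N n = ?A - {?k}" using True True2 kN by (auto simp: A3_def Suc_le_eq le_less)
      have c: "I \<inter> J \<inter> {Suc n..N} = insert ?k (I \<inter> J \<inter> {Suc ?k..N})" using True True2 kN by (auto simp: Suc_le_eq le_less)
      have cc: "card (I \<inter> J \<inter> {Suc n..N}) = Suc ?c" unfolding c by (subst card_insert_disjoint) auto
      have mg: "(\<Sum>T\<in>Pow ?A. wedge_list (cw N (blk3 I J n (T - {?k}))) S)
         = 2 * (\<Sum>T\<in>Pow (?A - {?k}). wedge_list (cw N (blk3 I J n T)) S)" for S
        by (rule sum_merge[OF finA3 kA])
      have "foldr (psi N) (map E (filter (\<lambda>i. i \<in> I) [Suc n..<Suc N])) X2
         = (\<lambda>S. of_int \<sigma> * (2 ^ ?c * (\<Sum>T\<in>Pow ?A. (-1) ^ ?len * wedge_list (cw N (blk3 I J n (T - {?k}))) S)))"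
        unfolding start by (rule ext, rule arg_cong[where f="\<lambda>x. _ * (_ * x)"], rule sum.cong) (auto simp: t)
      also have "\<dots> = (\<lambda>S. of_int (\<sigma> * (-1) ^ ?len) * (2 ^ card (I \<inter> J \<inter> {Suc n..N}) * (\<Sum>T\<in>Pow (A3 I J N n). wedge_list (cw N (blk3 I J n T)) S)))"
      proof (rule ext)
        fix S
        have "(\<Sum>T\<in>Pow ?A. (-1) ^ ?len * wedge_list (cw N (blk3 I J n (T - {?k}))) S)
          = (-1) ^ ?len * (2 * (\<Sum>T\<in>Pow (?A - {?k}). wedge_list (cw N (blk3 I J n T)) S))"
          by (simp add: sum_distrib_left[symmetric] mg)
        then show "of_int \<sigma> * (2 ^ ?c * (\<Sum>T\<in>Pow ?A. (-1) ^ ?len * wedge_list (cw N (blk3 I J n (T - {?k}))) S))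
          = of_int (\<sigma> * (-1) ^ ?len) * (2 ^ card (I \<inter> J \<inter> {Suc n..N}) * (\<Sum>T\<in>Pow (A3 I J N n). wedge_list (cw N (blk3 I J n T)) S))"
          by (simp add: A cc)
      qed
      finally show ?thesis using pm1[OF s] by blast
    qed
  qed
qed



lemma sorted_filter_upt: "I \<subseteq> {1..n} \<Longrightarrow> sorted_list_of_set I = filter (\<lambda>i. i \<in> I) [Suc 0..<Suc n]"
proof -
  assume I: "I \<subseteq> {1..n}"
  have fin: "finite I" using I finite_subset by blast
  show ?thesis
    by (rule sorted_distinct_set_unique) (use fin I in \<open>auto simp: sorted_wrt_filter simp del: upt_Suc\<close>)
qed

lemma tgt_set_mem:
  assumes I: "I \<subseteq> {1..n}" and J: "J \<subseteq> {1..n}" and R: "R \<subseteq> (I - J) \<union> (J - I)"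
  defines "\<phi> \<equiv> (R \<inter> (I - J)) \<union> ((J - I) - R)"
  shows "set (cw n (blk3 I J 0 \<phi>)) = set (map E (sorted_list_of_set (I \<inter> J)) @ map E (sorted_list_of_set R)
                       @ map F (sorted_list_of_set (({1..n} - I) \<inter> ({1..n} - J)))
                       @ map F (sorted_list_of_set R))"
proof -
  have fin: "finite I" "finite J" "finite R" using I J R finite_subset
    by (metis finite_Diff finite_Un finite_atLeastAtMost)+
  have finIJ: "finite (I \<inter> J)" "finite (({1..n} - I) \<inter> ({1..n} - J))" using fin by auto
  show ?thesis
  proof (rule set_eqI)
    fix x
    show "x \<in> set (cw n (blk3 I J 0 \<phi>)) \<longleftrightarrow> x \<in> set (map E (sorted_list_of_set (I \<inter> J)) @ map E (sorted_list_of_set R)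
                       @ map F (sorted_list_of_set (({1..n} - I) \<inter> ({1..n} - J)))
                       @ map F (sorted_list_of_set R))"
      unfolding set_cw_mem[OF good3] using fin finIJ I J R
      by (cases x) (auto simp: blk3_def \<phi>_def)
  qed
qed


theorem mainTheorem2:
  fixes n :: nat and I J :: "nat set"
  assumes "I \<subseteq> {1..n}" and "J \<subseteq> {1..n}"
  shows "\<exists>\<epsilon> :: nat set \<Rightarrow> int.
    (\<forall>R. R \<subseteq> (I - J) \<union> (J - I) \<longrightarrow> \<epsilon> R \<in> {1, -1}) \<and>
    beta n I J =
      (\<lambda>S. 2 ^ card (I \<inter> J) *
        (\<Sum>R\<in>Pow ((I - J) \<union> (J - I)).
           of_int (\<epsilon> R) *
           wedge_list (map E (sorted_list_of_set (I \<inter> J)) @ map E (sorted_list_of_set R)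
                       @ map F (sorted_list_of_set (({1..n} - I) \<inter> ({1..n} - J)))
                       @ map F (sorted_list_of_set R)) S))"
proof -
  note I = assms(1) and J = assms(2)
  define tgt where "tgt R = map E (sorted_list_of_set (I \<inter> J)) @ map E (sorted_list_of_set R)
                       @ map F (sorted_list_of_set (({1..n} - I) \<inter> ({1..n} - J)))
                       @ map F (sorted_list_of_set R)" for R
  define \<phi> where "\<phi> R = (R \<inter> (I - J)) \<union> ((J - I) - R)" for R
  define Dset where "Dset = (I - J) \<union> (J - I)"
  have finI: "finite I" and finJ: "finite J" using I J finite_subset by blast+
  have p1: "foldr (psi n) (rev (map E (sorted_list_of_set J))) (Defs.mono {} {}) = wedge_list (rev (map E (sorted_list_of_set J)))"
    by (rule phase1) (use J finJ in \<open>auto simp: valid_def\<close>)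
  obtain \<sigma>2 :: int where s2: "\<sigma>2 \<in> {1, -1}" and p2: "foldr (psi n) (map F [Suc 0..<Suc n]) (wedge_list (rev (map E (sorted_list_of_set J))))
     = (\<lambda>S. of_int \<sigma>2 * (\<Sum>D\<in>Pow (J \<inter> {Suc 0..n}). wedge_list (cw n (blk2 J 0 D)) S))"
    using phase2[OF J, of 0] by auto
  obtain \<sigma> :: int where s: "\<sigma> \<in> {1, -1}" and p3: "foldr (psi n) (map E (filter (\<lambda>i. i \<in> I) [Suc 0..<Suc n])) (foldr (psi n) (map F [Suc 0..<Suc n]) (wedge_list (rev (map E (sorted_list_of_set J)))))
     = (\<lambda>S. of_int \<sigma> * (2 ^ card (I \<inter> J \<inter> {Suc 0..n}) * (\<Sum>T\<in>Pow (A3 I J n 0). wedge_list (cw n (blk3 I J 0 T)) S)))"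
    using phase3[OF I J _ p2 s2, of 0] by auto
  have beta_eq: "beta n I J = (\<lambda>S. of_int \<sigma> * (2 ^ card (I \<inter> J) * (\<Sum>T\<in>Pow Dset. wedge_list (cw n (blk3 I J 0 T)) S)))"
  proof -
    have "beta n I J = foldr (psi n) (map E (filter (\<lambda>i. i \<in> I) [Suc 0..<Suc n])) (foldr (psi n) (map F [Suc 0..<Suc n]) (foldr (psi n) (rev (map E (sorted_list_of_set J))) (Defs.mono {} {})))"
      by (simp add: beta_def theta_word_def alpha_word_def eword_def fword_def sorted_filter_upt[OF I] del: upt_Suc)
    also have "\<dots> = (\<lambda>S. of_int \<sigma> * (2 ^ card (I \<inter> J \<inter> {Suc 0..n}) * (\<Sum>T\<in>Pow (A3 I J n 0). wedge_list (cw n (blk3 I J 0 T)) S)))"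
      by (simp only: p1 p3)
    also have "A3 I J n 0 = Dset" using I J by (auto simp: A3_def Dset_def)
    also have "I \<inter> J \<inter> {Suc 0..n} = I \<inter> J" using I by auto
    finally show ?thesis .
  qed
  have key: "\<exists>s::int. s \<in> {1, -1} \<and> wedge_list (cw n (blk3 I J 0 (\<phi> R))) = (\<lambda>S. of_int s * wedge_list (tgt R) S)"
    if R: "R \<subseteq> Dset" for R
  proof (rule wedge_sameset)
    show "distinct (cw n (blk3 I J 0 (\<phi> R)))" by (rule distinct_cw[OF good3 dist3])
    have finR: "finite R" using R finI finJ Dset_def finite_subset by blast
    show "distinct (tgt R)" using R finR finI finJ
      by (auto simp: tgt_def distinct_map inj_on_def Dset_def)
    show "set (cw n (blk3 I J 0 (\<phi> R))) = set (tgt R)"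
      unfolding tgt_def \<phi>_def by (rule tgt_set_mem[OF I J]) (use R Dset_def in auto)
  qed
  define sg where "sg R = (SOME s::int. s \<in> {1, -1} \<and> wedge_list (cw n (blk3 I J 0 (\<phi> R))) = (\<lambda>S. of_int s * wedge_list (tgt R) S))" for R
  have sg: "sg R \<in> {1, -1} \<and> wedge_list (cw n (blk3 I J 0 (\<phi> R))) = (\<lambda>S. of_int (sg R) * wedge_list (tgt R) S)"
    if "R \<subseteq> Dset" for R
    unfolding sg_def by (rule someI_ex[OF key[OF that]])
  define \<epsilon> where "\<epsilon> R = \<sigma> * sg R" for R
  have phiphi: "\<phi> (\<phi> R) = R" if "R \<subseteq> Dset" for R using that by (auto simp: \<phi>_def Dset_def)
  have phiD: "\<phi> R \<subseteq> Dset" for R by (auto simp: \<phi>_def Dset_def)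
  have reidx: "(\<Sum>T\<in>Pow Dset. wedge_list (cw n (blk3 I J 0 T)) S) = (\<Sum>R\<in>Pow Dset. wedge_list (cw n (blk3 I J 0 (\<phi> R))) S)" for S
    by (rule sum.reindex_bij_witness[where i=\<phi> and j=\<phi>]) (use phiphi phiD in auto)
  have main: "\<exists>\<epsilon> :: nat set \<Rightarrow> int. (\<forall>R. R \<subseteq> (I - J) \<union> (J - I) \<longrightarrow> \<epsilon> R \<in> {1, -1}) \<and>
    beta n I J = (\<lambda>S. 2 ^ card (I \<inter> J) * (\<Sum>R\<in>Pow ((I - J) \<union> (J - I)). of_int (\<epsilon> R) * wedge_list (tgt R) S))"
  proof (intro exI conjI allI impI)
    fix R assume "R \<subseteq> (I - J) \<union> (J - I)"
    then show "\<epsilon> R \<in> {1, -1}" using sg[of R] s by (auto simp: \<epsilon>_def Dset_def)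
  next
    show "beta n I J = (\<lambda>S. 2 ^ card (I \<inter> J) * (\<Sum>R\<in>Pow ((I - J) \<union> (J - I)). of_int (\<epsilon> R) * wedge_list (tgt R) S))"
    proof (rule ext)
      fix S
      have "(\<Sum>R\<in>Pow Dset. wedge_list (cw n (blk3 I J 0 (\<phi> R))) S) = (\<Sum>R\<in>Pow Dset. of_int (sg R) * wedge_list (tgt R) S)"
        by (rule sum.cong[OF refl]) (use sg in auto)
      then have "beta n I J S = of_int \<sigma> * (2 ^ card (I \<inter> J) * (\<Sum>R\<in>Pow Dset. of_int (sg R) * wedge_list (tgt R) S))"
        by (simp only: beta_eq reidx)
      also have "\<dots> = 2 ^ card (I \<inter> J) * (\<Sum>R\<in>Pow Dset. of_int (\<epsilon> R) * wedge_list (tgt R) S)"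
        by (simp add: \<epsilon>_def sum_distrib_left mult.assoc mult.left_commute)
      finally show "beta n I J S = 2 ^ card (I \<inter> J) * (\<Sum>R\<in>Pow ((I - J) \<union> (J - I)). of_int (\<epsilon> R) * wedge_list (tgt R) S)"
        by (simp add: Dset_def)
    qed
  qed
  then show ?thesis by (simp only: tgt_def)
qed

end
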